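(* For every $p>1$, the function $t\mapsto\dot H_e(t/p)/\dot H_e(t)$ is increasing on $(0,\ln2)$.
   Context: $\dot H_e(t)=te^{-t}-(1-e^{-t})\ln(1-e^{-t})$ for $t>0$. *)

theory Defs
  imports "HOL-Analysis.Analysis"
begin

text \<open>The derivative of the entropy-type function H_e, given explicitly for t > 0.\<close>
definition Hedot :: "real \<Rightarrow> real" where
  "Hedot t = t * exp (- t) - (1 - exp (- t)) * ln (1 - exp (- t))"

end

theory Submission
  imports Defs
begin

lemma ln_ratio:
  fixes x y :: real
  assumes "0 < x" "x < y"
  shows "x * ln (1 + y) \<le> y * ln (1 + x)"
proof -
  define t where "t = x / y"
  have t: "0 \<le> t" "t \<le> 1" using assms by (auto simp: t_def)
  have "ln ((1 - t) *\<^sub>R 1 + t *\<^sub>R (1 + y)) \<ge> (1 - t) * ln 1 + t * ln (1 + y)"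
    using concave_onD[OF ln_concave t, of 1 "1 + y"] assms by simp
  moreover have "(1 - t) *\<^sub>R 1 + t *\<^sub>R (1 + y) = 1 + x"
    using assms by (simp add: t_def field_simps)
  ultimately have "(1 - t) * ln 1 + t * ln (1 + y) \<le> ln (1 + x)" by metis
  then have "t * ln (1 + y) \<le> ln (1 + x)" by simp
  then have "y * (t * ln (1 + y)) \<le> y * ln (1 + x)"
    using assms by (intro mult_left_mono) auto
  then show ?thesis using assms by (simp add: t_def)
qed

lemma k_mono:
  fixes x y :: real
  assumes "0 < x" "x < y" "y < 1"
  shows "(1 + x) / (- ln x) + x / ln (1 + x) < (1 + y) / (- ln y) + y / ln (1 + y)"
proof -
  have ly: "0 < - ln y" using assms by simp
  have lxy: "- ln y < - ln x" using assms by simp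
  have "(1 + x) / (- ln x) < (1 + x) / (- ln y)"
    using assms ly lxy by (intro divide_strict_left_mono) (auto intro: mult_neg_neg)
  also have "\<dots> \<le> (1 + y) / (- ln y)"
    using assms ly by (intro divide_right_mono) auto
  finally have 1: "(1 + x) / (- ln x) < (1 + y) / (- ln y)" .
  have L1: "0 < ln (1 + x)" "0 < ln (1 + y)" using assms by auto
  have "x * ln (1 + y) \<le> y * ln (1 + x)" using ln_ratio assms by auto
  then have 2: "x / ln (1 + x) \<le> y / ln (1 + y)"
    using L1 by (simp add: divide_simps)
  show ?thesis using 1 2 by linarith
qed

definition NN :: "real \<Rightarrow> real" where
  "NN z = (1 + z) * ln (1 + z) - z * ln z"

lemma key_x:
  fixes x y :: real
  assumes "0 < x" "x < y" "y < 1"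
  shows "ln (1 + y) * (- ln y) * NN x < ln (1 + x) * (- ln x) * NN y"
proof -
  define k where "k z = (1 + z) / (- ln z) + z / ln (1 + z)" for z :: real
  have NNk: "NN z = ln (1 + z) * (- ln z) * k z" if "0 < z" "z < 1" for z :: real
  proof -
    have "0 < ln (1 + z)" "0 < - ln z" using that by auto
    then show ?thesis unfolding NN_def k_def by (simp add: field_simps)
  qed
  have pos: "0 < ln (1 + y) * (- ln y) * (ln (1 + x) * (- ln x))"
    using assms by (intro mult_pos_pos) auto
  have "k x < k y" using k_mono assms by (simp add: k_def)
  then have "ln (1 + y) * (- ln y) * (ln (1 + x) * (- ln x)) * k x
      < ln (1 + y) * (- ln y) * (ln (1 + x) * (- ln x)) * k y"
    using mult_strict_left_mono[OF \<open>k x < k y\<close> pos] by simp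
  then show ?thesis using NNk[of x] NNk[of y] assms by (simp add: algebra_simps)
qed

definition DD :: "real \<Rightarrow> real" where
  "DD t = - exp (- t) * (t + ln (1 - exp (- t)))"

lemma Hedot_deriv:
  fixes t :: real
  assumes "0 < t"
  shows "(Hedot has_real_derivative DD t) (at t)"
proof -
  have e: "exp (- t) < 1" using assms by simp
  have "((\<lambda>t. t * exp (- t) - (1 - exp (- t)) * ln (1 - exp (- t))) has_real_derivative
     (1 * exp (- t) + t * (exp (- t) * (- 1)) - ((0 - exp (- t) * (- 1)) * ln (1 - exp (- t))
       + (1 - exp (- t)) * ((0 - exp (- t) * (- 1)) / (1 - exp (- t)))))) (at t)"
    using e by (auto intro!: derivative_eq_intros)
  moreover have "1 * exp (- t) + t * (exp (- t) * (- 1)) - ((0 - exp (- t) * (- 1)) * ln (1 - exp (- t))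
       + (1 - exp (- t)) * ((0 - exp (- t) * (- 1)) / (1 - exp (- t)))) = DD t"
    using e by (simp add: DD_def field_simps)
  ultimately show ?thesis unfolding Hedot_def[abs_def] by simp
qed

lemma x_form:
  fixes t :: real
  assumes "0 < t"
  defines "x \<equiv> exp t - 1"
  shows "Hedot t = NN x / (1 + x)" "DD t = - ln x / (1 + x)" "t = ln (1 + x)"
    "0 < x"
proof -
  have x0: "0 < x" using assms by simp
  have ex: "exp (- t) = 1 / (1 + x)" by (simp add: x_def exp_minus inverse_eq_divide)
  have q: "1 - exp (- t) = x / (1 + x)" using x0 by (simp add: ex field_simps)
  have lq: "ln (x / (1 + x)) = ln x - ln (1 + x)" using x0 by (simp add: ln_div)
  have tt: "t = ln (1 + x)" by (simp add: x_def)
  show "t = ln (1 + x)" by (rule tt)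
  show "0 < x" by (rule x0)
  show "Hedot t = NN x / (1 + x)"
  proof -
    have ne: "1 + x \<noteq> 0" using x0 by simp
    have "Hedot t = t * (1 / (1 + x)) - (x / (1 + x)) * (ln x - t)"
      proof -
        have q': "1 - 1 / (1 + x) = x / (1 + x)" using ne by (simp add: field_simps)
        show ?thesis unfolding Hedot_def by (simp only: ex q' lq tt[symmetric])
      qed
    also have "\<dots> = (t - x * (ln x - t)) / (1 + x)"
      by (simp add: diff_divide_distrib)
    also have "t - x * (ln x - t) = NN x"
      unfolding NN_def tt[symmetric] by (simp add: algebra_simps)
    finally show ?thesis .
  qed
  show "DD t = - ln x / (1 + x)"
    unfolding DD_def using x0 by (simp add: ex lq tt[symmetric] field_simps)
qed

lemma key_t:
  fixes a b :: real
  assumes "0 < a" "a < b" "b < ln 2"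
  shows "b * DD b * Hedot a < a * DD a * Hedot b"
proof -
  define x where "x = exp a - 1"
  define y where "y = exp b - 1"
  note X = x_form[OF assms(1), folded x_def]
  note Y = x_form[of b, folded y_def]
  have b0: "0 < b" using assms by simp
  note Y = Y[OF b0]
  have xy: "x < y" using assms by (simp add: x_def y_def)
  have y1: "y < 1" using assms unfolding y_def
    by (smt (verit) exp_less_cancel_iff exp_ln)
  have K: "ln (1 + y) * (- ln y) * NN x < ln (1 + x) * (- ln x) * NN y"
    using key_x X(4) xy y1 by blast
  have pos: "0 < (1 + x) * (1 + y)" using X(4) Y(4) by simp
  have "b * DD b * Hedot a = ln (1 + y) * (- ln y / (1 + y)) * (NN x / (1 + x))"
    unfolding X(1) Y(2) using Y(3) by simp
  also have "\<dots> = ln (1 + y) * (- ln y) * NN x / ((1 + x) * (1 + y))"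
    using pos by (simp add: field_simps)
  also have "\<dots> < ln (1 + x) * (- ln x) * NN y / ((1 + x) * (1 + y))"
    using K pos by (simp add: divide_strict_right_mono)
  also have "\<dots> = ln (1 + x) * (- ln x / (1 + x)) * (NN y / (1 + y))"
    using pos by (simp add: field_simps)
  also have "\<dots> = a * DD a * Hedot b"
    unfolding X(2) Y(1) using X(3) by simp
  finally show ?thesis .
qed

lemma Hedot_pos:
  fixes t :: real
  assumes "0 < t"
  shows "0 < Hedot t"
proof -
  define x where "x = exp t - 1"
  note X = x_form[OF assms, folded x_def]
  have "0 < (1 + x) * ln (1 + x)" using X(4) by simp
  moreover have "x * ln x \<le> 0 \<or> True" by simp
  moreover have "NN x > 0"
  proof (cases "x < 1")
    case True
    then have "x * ln x < 0" using X(4) by (simp add: mult_pos_neg)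
    then show ?thesis unfolding NN_def using \<open>0 < (1 + x) * ln (1 + x)\<close> by linarith
  next
    case False
    have "ln x < ln (1 + x)" using X(4) by simp
    then have "x * ln x < x * ln (1 + x)" using X(4) by simp
    also have "\<dots> \<le> (1 + x) * ln (1 + x)" using X(4) by (simp add: mult_right_mono)
    finally show ?thesis unfolding NN_def by simp
  qed
  ultimately show ?thesis using X(1) X(4) by simp
qed

theorem mainTheorem18:
  fixes p :: real
  assumes "p > 1"
  shows "strict_mono_on {0<..<ln 2} (\<lambda>t. Hedot (t / p) / Hedot t)"
proof (rule strict_mono_onI)
  fix s t :: real
  assume s: "s \<in> {0<..<ln 2}" and t: "t \<in> {0<..<ln 2}" and st: "s < t"
  show "Hedot (s / p) / Hedot s < Hedot (t / p) / Hedot t"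
  proof (rule DERIV_pos_imp_increasing[OF st])
    fix r assume r: "s \<le> r" "r \<le> t"
    have r0: "0 < r" "r < ln 2" using r s t by auto
    have rp: "0 < r / p" "r / p < r" using r0 assms by (auto simp: divide_simps)
    have f0: "0 < Hedot r" "0 < Hedot (r / p)" using Hedot_pos r0 rp by auto
    have d1: "(Hedot has_real_derivative DD r) (at r)" using Hedot_deriv r0 by auto
    have d0: "((\<lambda>r. r / p) has_real_derivative 1 / p) (at r)"
      using assms by (auto intro!: derivative_eq_intros)
    have d2: "((\<lambda>r. Hedot (r / p)) has_real_derivative DD (r / p) * (1 / p)) (at r)"
      using DERIV_chain2[where f=Hedot and g="\<lambda>r. r / p" and x=r and Da="DD (r/p)" and Db="1/p" and s=UNIV, OF Hedot_deriv[OF rp(1)] d0] assms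
      by simp
    have D: "((\<lambda>r. Hedot (r / p) / Hedot r) has_real_derivative
       ((DD (r / p) * (1 / p)) * Hedot r - Hedot (r / p) * DD r) / (Hedot r * Hedot r)) (at r)"
      using DERIV_divide[OF d2 d1] f0 by simp
    have K: "r * DD r * Hedot (r / p) < (r / p) * DD (r / p) * Hedot r"
      by (rule key_t[OF rp(1) rp(2) r0(2)])
    have "0 < (DD (r / p) * (1 / p)) * Hedot r - Hedot (r / p) * DD r"
    proof -
      have "r * ((DD (r / p) * (1 / p)) * Hedot r - Hedot (r / p) * DD r)
          = (r / p) * DD (r / p) * Hedot r - r * DD r * Hedot (r / p)" by (simp add: algebra_simps)
      then have "0 < r * ((DD (r / p) * (1 / p)) * Hedot r - Hedot (r / p) * DD r)" using K by simp
      then show ?thesis using r0 by (simp add: zero_less_mult_iff)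
    qed
    then show "\<exists>y. ((\<lambda>r. Hedot (r / p) / Hedot r) has_real_derivative y) (at r) \<and> 0 < y"
      using D f0 by (intro exI[of _ "((DD (r / p) * (1 / p)) * Hedot r - Hedot (r / p) * DD r) / (Hedot r * Hedot r)"]) auto
  qed
qed

end
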